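(* Let $A^{(n)}_k$ be Knuth's Faulhaber coefficients, defined by $$\sum_{n\ge1}\sum_{k=0}^{n-1}\frac{x^{2n}}{(2n)!}A^{(n)}_k y^{k}=\left(\frac{x\sqrt y}{2}\right)\frac{\cosh\!\left(\tfrac12 x\sqrt{y+4}\right)-\cosh\!\left(\tfrac12 x\sqrt y\right)}{\sinh\!\left(\tfrac12 x\sqrt y\right)},$$ and for $n\ge k\ge2$ let $b(n,k)=(-1)^{n-k}A^{(n)}_{n-k}\frac{(k!)^2}{(2k+1)!}$. Then for all $n\ge k\ge2$, $$b(n,k)=\frac{4\Gamma(2n+1)\Gamma(k+2)}{\Gamma(2k+3)}\sum_{j=0}^{\lfloor k/2\rfloor-1}\frac{(-1)^{j}\Gamma(2k-2-2j)}{\Gamma(k-1-2j)\Gamma(2j+2)}\,\frac{\zeta(2n-2j-2)}{(2\pi)^{2n-2j-2}},$$ where $\zeta$ is the Riemann zeta function. *)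

theory Defs
  imports "HOL-Analysis.Analysis"
begin

definition riemann_zeta :: "real \<Rightarrow> real" where
  "riemann_zeta s = (\<Sum>m. 1 / (real (Suc m)) powr s)"

text \<open>The right-hand side of Knuth's generating function, as a function of x and y
  (extended by its limit value 0 at the removable point sinh(x sqrt y / 2) = 0).\<close>
definition faulhaber_gf :: "real \<Rightarrow> real \<Rightarrow> real" where
  "faulhaber_gf x y =
     (if sinh (x * sqrt y / 2) = 0 then 0
      else (x * sqrt y / 2) *
           (cosh (x * sqrt (y + 4) / 2) - cosh (x * sqrt y / 2)) / sinh (x * sqrt y / 2))"

definition faulhaber_A :: "nat \<Rightarrow> nat \<Rightarrow> real" where
  "faulhaber_A = (THE A.
      (\<forall>n k. (n = 0 \<or> n \<le> k) \<longrightarrow> A n k = 0) \<and>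
      (\<forall>y > 0. \<exists>e > 0. \<forall>x. \<bar>x\<bar> < e \<longrightarrow>
          (\<lambda>n. \<Sum>k<n. x ^ (2 * n) / fact (2 * n) * A n k * y ^ k) sums faulhaber_gf x y))"

definition faulhaber_b :: "nat \<Rightarrow> nat \<Rightarrow> real" where
  "faulhaber_b n k = (-1) ^ (n - k) * faulhaber_A n (n - k) * (fact k)\<^sup>2 / fact (2 * k + 1)"

end

theory Submission
  imports Defs "HOL-Complex_Analysis.Cauchy_Integral_Formula"
begin

lemma powser_zero_unique:
  fixes d :: "nat \<Rightarrow> real"
  assumes dpos: "\<delta> > 0" and sm: "\<And>T. 0 < T \<Longrightarrow> T < \<delta> \<Longrightarrow> (\<lambda>n. d n * T ^ n) sums 0"
  shows "d n = 0"
proof -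
  define r where "r = \<delta> / 2"
  have r: "r > 0" "r < \<delta>" using dpos by (auto simp: r_def)
  have "summable (\<lambda>n. d n * r ^ n)" using sm[OF r(1) r(2)] by (simp add: sums_iff)
  hence crad: "conv_radius d \<ge> ereal r" using conv_radius_geI[of d r] r by simp
  define f where "f x = (\<Sum>n. d n * x ^ n)" for x :: real
  have fs: "(\<lambda>n. d n * x ^ n) sums f x" if "norm x < r" for x
  proof -
    have "ereal (norm x) < ereal r" using that by simp
    hence "ereal (norm x) < conv_radius d" using crad by (rule order.strict_trans2)
    from summable_in_conv_radius[OF this] show ?thesis by (simp add: f_def summable_sums)
  qed
  have f0: "f x = 0" if "0 < x" "x < r" for x
    using sm[of x] that r fs[of x] sums_unique2 by fastforce
  have d0: "d 0 = 0"
  proof -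
    have "(f \<longlongrightarrow> d 0) (at 0)" by (rule powser_limit_0[OF r(1)]) (use fs in auto)
    hence l1: "(f \<longlongrightarrow> d 0) (at_right 0)" by (simp add: filterlim_at_split)
    have "eventually (\<lambda>x. f x = 0) (at_right (0::real))"
      using r(1) by (auto simp: eventually_at_right_field intro!: exI[of _ r] f0)
    hence l2: "(f \<longlongrightarrow> 0) (at_right 0)" by (simp add: tendsto_eventually)
    from tendsto_unique[OF _ l1 l2] show ?thesis by simp
  qed
  show ?thesis
  proof (cases n)
    case 0 thus ?thesis using d0 by simp
  next
    case (Suc m)
    show ?thesis
    proof (rule ccontr)
      assume nz: "d n \<noteq> 0"
      have "f 0 = 0" using d0 by (simp add: f_def)
      then obtain s where s: "0 < s" "\<And>z. z \<in> cball 0 s - {0} \<Longrightarrow> f z \<noteq> 0"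
        using powser_0_nonzero[where r=r and a=d and \<xi>=0 and f=f and m=n] r fs nz Suc by auto
      define z where "z = min s (r/2)"
      have "z \<in> cball 0 s - {0}" using s r by (auto simp: z_def)
      moreover have "f z = 0" using s r by (intro f0) (auto simp: z_def)
      ultimately show False using s by blast
    qed
  qed
qed

lemma fps_eq_pos:
  fixes F G :: "real fps"
  assumes "\<delta> > 0" "ereal \<delta> \<le> fps_conv_radius F" "ereal \<delta> \<le> fps_conv_radius G"
    and eq: "\<And>T. 0 < T \<Longrightarrow> T < \<delta> \<Longrightarrow> eval_fps F T = eval_fps G T"
  shows "F = G"
proof -
  have "fps_nth (F - G) n = 0" for n
  proof (rule powser_zero_unique[OF assms(1)])
    fix T :: real assume T: "0 < T" "T < \<delta>"
    have r: "ereal (norm T) < fps_conv_radius (F - G)"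
    proof -
      have "ereal (norm T) < ereal \<delta>" using T by simp
      also have "ereal \<delta> \<le> min (fps_conv_radius F) (fps_conv_radius G)" using assms by simp
      also have "\<dots> \<le> fps_conv_radius (F - G)" by (rule fps_conv_radius_diff)
      finally show ?thesis .
    qed
    have Td: "ereal (norm T) < ereal \<delta>" using T by simp
    have r1: "ereal (norm T) < fps_conv_radius F" "ereal (norm T) < fps_conv_radius G"
      using order.strict_trans2[OF Td assms(2)] order.strict_trans2[OF Td assms(3)] by auto
    from sums_eval_fps[OF r] show "(\<lambda>n. fps_nth (F - G) n * T ^ n) sums 0"
      using eval_fps_diff[OF r1] eq[OF T] by simp
  qed
  thus ?thesis by (simp add: fps_eq_iff)
qed

lemma fps_conv_radius_fact_bound:
  fixes a :: "nat \<Rightarrow> real"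
  assumes "\<And>m. \<bar>a m\<bar> \<le> B ^ m / fact m" "B \<ge> 0"
  shows "fps_conv_radius (Abs_fps a) = \<infinity>"
proof -
  have "summable (\<lambda>n. a n * z ^ n)" for z :: real
  proof (rule summable_comparison_test')
    show "summable (\<lambda>n. (B * \<bar>z\<bar>) ^ n /\<^sub>R fact n)" by (rule summable_exp_generic)
    show "norm (a n * z ^ n) \<le> (B * \<bar>z\<bar>) ^ n /\<^sub>R fact n" for n
    proof -
      have "norm (a n * z ^ n) = \<bar>a n\<bar> * \<bar>z\<bar> ^ n" by (simp add: abs_mult power_abs)
      also have "\<dots> \<le> B ^ n / fact n * \<bar>z\<bar> ^ n" by (intro mult_right_mono assms) auto
      also have "\<dots> = (B * \<bar>z\<bar>) ^ n /\<^sub>R fact n" by (simp add: power_mult_distrib field_simps)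
      finally show ?thesis .
    qed
  qed
  thus ?thesis unfolding fps_conv_radius_def by (intro conv_radius_inftyI'') simp
qed

lemma cosh_paired: "(\<lambda>m. x ^ (2*m) / fact (2*m)) sums cosh (x::real)"
proof -
  have "(\<lambda>m. (\<lambda>n. if even n then x ^ n /\<^sub>R fact n else 0) (2*m)) sums cosh x"
    by (subst sums_mono_reindex) (auto intro: strict_monoI cosh_converges)
  thus ?thesis by (simp add: divide_inverse mult.commute)
qed

lemma sinh_paired: "(\<lambda>m. x ^ (2*m+1) / fact (2*m+1)) sums sinh (x::real)"
proof -
  have "(\<lambda>m. (\<lambda>n. if even n then 0 else x ^ n /\<^sub>R fact n) (2*m+1)) sums sinh x"
    by (subst sums_mono_reindex) (auto intro: strict_monoI sinh_converges elim!: oddE)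
  thus ?thesis by (simp add: divide_inverse mult.commute)
qed

lemma Gamma_reflection_real:
  fixes t :: real assumes "t \<notin> \<int>"
  shows "Gamma t * Gamma (1 - t) * sin (pi * t) = pi"
proof -
  have "Gamma (complex_of_real t) * Gamma (1 - complex_of_real t) = of_real pi / sin (of_real pi * of_real t)"
    by (rule Gamma_reflection_complex)
  hence "complex_of_real (Gamma t * Gamma (1 - t)) = complex_of_real (pi / sin (pi * t))"
    by (simp flip: Gamma_complex_of_real sin_of_real)
  hence "Gamma t * Gamma (1 - t) = pi / sin (pi * t)" by (simp only: of_real_eq_iff)
  moreover have "sin (pi * t) \<noteq> 0"
    using assms by (auto simp: sin_zero_iff_int2 Ints_def)
  ultimately show ?thesis by simp
qed

lemma Digamma_reflection_real:
  fixes t :: real assumes t: "0 < t" "t < 1"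
  shows "Digamma (1 - t) - Digamma t = pi * cos (pi * t) / sin (pi * t)"
proof -
  define G where "G x = Gamma x * Gamma (1 - x) * sin (pi * x)" for x :: real
  have nint: "x \<notin> \<int>" if "0 < x" "x < 1" for x :: real
  proof
    assume "x \<in> \<int>" then obtain m where "x = of_int m" by (auto elim: Ints_cases)
    with that show False by auto
  qed
  have Gc: "G x = pi" if "x \<in> {0<..<1}" for x using that nint Gamma_reflection_real by (auto simp: G_def)
  have np: "t \<notin> \<int>\<^sub>\<le>\<^sub>0" "1 - t \<notin> \<int>\<^sub>\<le>\<^sub>0" using t by (auto elim!: nonpos_Ints_cases)
  define G' where "G' = Gamma t * Digamma t * Gamma (1 - t) * sin (pi * t)
      - Gamma t * (Gamma (1 - t) * Digamma (1 - t)) * sin (pi * t)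
      + Gamma t * Gamma (1 - t) * (cos (pi * t) * pi)"
  have "(G has_field_derivative G') (at t)"
    unfolding G_def G'_def using np
    by (auto intro!: derivative_eq_intros simp: algebra_simps)
  hence "((\<lambda>_. pi) has_field_derivative G') (at t)"
    by (rule has_field_derivative_transform_within_open[where S="{0<..<1}"]) (use t Gc in auto)
  hence "G' = 0" using DERIV_const DERIV_unique by blast
  moreover have "Gamma t > 0" "Gamma (1 - t) > 0" using t by (auto intro: Gamma_real_pos)
  moreover have "sin (pi * t) > 0" using t by (intro sin_gt_zero) auto
  ultimately have "Gamma t * Gamma (1 - t) * (pi * cos (pi * t) + Digamma t * sin (pi * t)
      - sin (pi * t) * Digamma (1 - t)) = 0" "Gamma t * Gamma (1 - t) \<noteq> 0" "sin (pi * t) \<noteq> 0"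
    unfolding G'_def by (auto simp: algebra_simps)
  hence "pi * cos (pi * t) + Digamma t * sin (pi * t) - sin (pi * t) * Digamma (1 - t) = 0"
    by simp
  thus ?thesis using \<open>sin (pi * t) \<noteq> 0\<close> by (simp add: field_simps)
qed

lemma Digamma_sums:
  fixes z :: real assumes "z \<noteq> 0"
  shows "(\<lambda>n. inverse (of_nat (Suc n)) - inverse (z + of_nat n)) sums (Digamma z + euler_mascheroni)"
  using summable_Digamma[OF assms] by (simp add: Digamma_def summable_sums)

lemma cot_pfd_real:
  fixes t :: real assumes t: "0 < t" "t < 1"
  shows "(\<lambda>k. 2 * t / ((real k + 1)^2 - t^2)) sums (1 / t - pi * cos (pi * t) / sin (pi * t))"
proof -
  have "(\<lambda>n. (inverse (of_nat (Suc n)) - inverse ((1 + t) + of_nat n)) -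
             (inverse (of_nat (Suc n)) - inverse ((1 - t) + of_nat n))) sums
        ((Digamma (1 + t) + euler_mascheroni) - (Digamma (1 - t) + euler_mascheroni))"
    using t by (intro sums_diff Digamma_sums) auto
  also have "(\<lambda>n. (inverse (of_nat (Suc n)) - inverse ((1 + t) + of_nat n)) -
             (inverse (of_nat (Suc n)) - inverse ((1 - t) + of_nat n))) =
             (\<lambda>k. 2 * t / ((real k + 1)^2 - t^2))"
  proof
    fix k :: nat
    have a: "1 + t + real k \<noteq> 0" "1 - t + real k \<noteq> 0" using t by auto
    have b: "(real k + 1)^2 - t^2 = (1 + t + real k) * (1 - t + real k)" by (simp add: power2_eq_square algebra_simps)
    show "(inverse (of_nat (Suc k)) - inverse ((1 + t) + of_nat k)) -
             (inverse (of_nat (Suc k)) - inverse ((1 - t) + of_nat k)) = 2 * t / ((real k + 1)^2 - t^2)"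
    proof -
      have "(inverse (of_nat (Suc k)) - inverse ((1 + t) + of_nat k)) -
             (inverse (of_nat (Suc k)) - inverse ((1 - t) + of_nat k)) =
            1 / (1 - t + real k) - 1 / (1 + t + real k)" by (simp add: inverse_eq_divide add.assoc)
      also have "\<dots> = ((1 + t + real k) - (1 - t + real k)) / ((1 - t + real k) * (1 + t + real k))"
        using a by (simp add: diff_frac_eq)
      also have "\<dots> = 2 * t / ((real k + 1)^2 - t^2)" unfolding b by (simp add: mult.commute)
      finally show ?thesis .
    qed
  qed
  also have "(Digamma (1 + t) + euler_mascheroni) - (Digamma (1 - t) + euler_mascheroni) =
             Digamma t + 1 / t - Digamma (1 - t)"
    using Digamma_plus1[of t] t by (simp add: add.commute)
  also have "\<dots> = 1 / t - (Digamma (1 - t) - Digamma t)" by simp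
  also have "\<dots> = 1 / t - pi * cos (pi * t) / sin (pi * t)" using Digamma_reflection_real[OF t] by simp
  finally show ?thesis .
qed

lemma zeta_even_sums:
  fixes m :: nat assumes "m \<ge> 1"
  shows "(\<lambda>k. 1 / (real k + 1) ^ (2 * m)) sums riemann_zeta (real (2 * m))"
proof -
  have "summable (\<lambda>k. inverse (real k ^ (2 * m)))" using assms by (intro inverse_power_summable) auto
  hence "summable (\<lambda>k. inverse (real (Suc k) ^ (2 * m)))" by (subst summable_Suc_iff)
  hence s: "summable (\<lambda>k. 1 / (real k + 1) ^ (2 * m))" by (simp add: divide_inverse add.commute)
  have "riemann_zeta (real (2 * m)) = (\<Sum>k. 1 / (real k + 1) ^ (2 * m))"
    unfolding riemann_zeta_def
  proof (intro suminf_cong)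
    fix n :: nat
    have "real (Suc n) powr real (2 * m) = real (Suc n) ^ (2 * m)" by (rule powr_realpow) simp
    thus "1 / real (Suc n) powr real (2 * m) = 1 / (real n + 1) ^ (2 * m)" by (simp add: add.commute)
  qed
  with s show ?thesis by (simp add: summable_sums)
qed

lemma zeta_gen_sums:
  fixes t :: real assumes t: "0 < t" "t < 1"
  shows "(\<lambda>m. 2 * riemann_zeta (real (2 * (m + 1))) * t ^ (2 * (m + 1))) sums
           (1 - pi * t * cos (pi * t) / sin (pi * t))"
proof -
  define f where "f p = 2 * (t^2 / (real (fst p) + 1)^2) ^ (snd p + 1)" for p :: "nat \<times> nat"
  define g where "g k = 2 * t^2 / ((real k + 1)^2 - t^2)" for k :: nat
  define h where "h m = 2 * riemann_zeta (real (2 * (m + 1))) * t ^ (2 * (m + 1))" for m :: nat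
  define S where "S = 1 - pi * t * cos (pi * t) / sin (pi * t)"
  have fnn: "f p \<ge> 0" for p unfolding f_def by auto
  have inner: "((\<lambda>m. f (k, m)) has_sum g k) UNIV" for k
  proof -
    define q where "q = t^2 / (real k + 1)^2"
    have q: "0 \<le> q" "q < 1"
    proof -
      have "t^2 < 1" using t by (simp add: power_less_one_iff abs_less_iff)
      also have "1 \<le> (real k + 1)^2" by simp
      finally show "q < 1" by (simp add: q_def)
    qed (simp add: q_def)
    have "(\<lambda>m. q ^ m) sums (1 / (1 - q))" using q by (intro geometric_sums) simp
    hence "(\<lambda>m. 2 * q * q ^ m) sums (2 * q * (1 / (1 - q)))" by (rule sums_mult)
    also have "2 * q * (1 / (1 - q)) = g k"
    proof -
      have "(real k + 1)^2 - t^2 > 0" using q by (simp add: q_def field_simps)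
      thus ?thesis unfolding g_def q_def using q by (simp add: field_simps)
    qed
    finally have "(\<lambda>m. f (k, m)) sums g k" by (simp add: f_def q_def mult.assoc)
    thus ?thesis using fnn by (intro sums_nonneg_imp_has_sum) auto
  qed
  have e1: "(\<lambda>k. t * (2 * t / ((real k + 1)^2 - t^2))) = g" by (auto simp: g_def fun_eq_iff power2_eq_square)
  have e2: "t * (1 / t - pi * cos (pi * t) / sin (pi * t)) = S" using t by (simp add: S_def field_simps)
  have gs: "g sums S"
    using sums_mult[OF cot_pfd_real[OF t], of t] unfolding e1 e2 .
  have gnn: "g k \<ge> 0" for k using has_sum_nonneg[OF inner[of k]] fnn by auto
  have gS: "(g has_sum S) UNIV" using gs gnn by (intro sums_nonneg_imp_has_sum) auto
  have fsum: "f summable_on (UNIV \<times> UNIV)"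
    using summable_on_SigmaI[where A=UNIV and B="\<lambda>_. UNIV" and f=f and g=g] inner gS fnn has_sum_imp_summable by blast
  have fS: "(f has_sum S) (UNIV \<times> UNIV)"
    using has_sum_SigmaI[where A=UNIV and B="\<lambda>_. UNIV" and f=f and g=g and S=S] inner gS fsum by blast
  hence fS': "((\<lambda>(m, k). f (k, m)) has_sum S) (UNIV \<times> UNIV)" by (subst (asm) has_sum_swap)
  have inner2: "((\<lambda>k. (\<lambda>(m, k). f (k, m)) (m, k)) has_sum h m) UNIV" for m
  proof -
    have "(\<lambda>k. 1 / (real k + 1) ^ (2 * (m + 1))) sums riemann_zeta (real (2 * (m + 1)))"
      by (rule zeta_even_sums) simp
    hence "(\<lambda>k. 2 * t ^ (2 * (m + 1)) * (1 / (real k + 1) ^ (2 * (m + 1)))) sums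
             (2 * t ^ (2 * (m + 1)) * riemann_zeta (real (2 * (m + 1))))" by (rule sums_mult)
    moreover have "(\<lambda>k. f (k, m)) = (\<lambda>k. 2 * t ^ (2 * (m + 1)) * (1 / (real k + 1) ^ (2 * (m + 1))))"
      by (simp add: fun_eq_iff f_def power_divide power_mult power2_eq_square mult.assoc)
    moreover have "h m = 2 * t ^ (2 * (m + 1)) * riemann_zeta (real (2 * (m + 1)))"
      by (simp add: h_def)
    ultimately have "(\<lambda>k. f (k, m)) sums h m" by simp
    thus ?thesis using fnn by (intro sums_nonneg_imp_has_sum) auto
  qed
  have "(h has_sum S) UNIV" by (rule has_sum_SigmaD[OF fS' inner2]) 
  thus ?thesis unfolding h_def S_def by (intro has_sum_imp_sums) (simp add: mult_ac)
qed

definition Cf :: "real fps" where "Cf = Abs_fps (\<lambda>p. (-1/4)^p / fact (2*p))"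
definition Sf :: "real fps" where "Sf = Abs_fps (\<lambda>m. (-1/4)^m / (2 * fact (2*m+1)))"
definition Wf :: "real fps" where
  "Wf = Abs_fps (\<lambda>m. if m = 0 then 1 else -2 * riemann_zeta (real (2*m)) / (2*pi)^(2*m))"

lemma eval_fps_eqI:
  fixes F :: "real fps"
  assumes "ereal (norm T) < fps_conv_radius F" "(\<lambda>n. fps_nth F n * T ^ n) sums v"
  shows "eval_fps F T = v"
  using sums_eval_fps[OF assms(1)] assms(2) sums_unique2 by blast

lemma fact_le_fact_2m: "fact m \<le> (fact (2*m) :: real)" "fact m \<le> (fact (2*m+1) :: real)"
  by (intro fact_mono; simp)+

lemma Cf_radius: "fps_conv_radius Cf = \<infinity>"
  unfolding Cf_def
proof (rule fps_conv_radius_fact_bound[where B="1/4"])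
  fix m :: nat
  have "\<bar>(-1/4::real)^m / fact (2*m)\<bar> = (1/4)^m / fact (2*m)" by (simp add: power_abs)
  also have "\<dots> \<le> (1/4)^m / fact m"
    by (intro divide_left_mono fact_le_fact_2m) auto
  finally show "\<bar>(-1/4::real)^m / fact (2*m)\<bar> \<le> (1/4)^m / fact m" .
qed simp

lemma Sf_radius: "fps_conv_radius Sf = \<infinity>"
  unfolding Sf_def
proof (rule fps_conv_radius_fact_bound[where B="1/4"])
  fix m :: nat
  have "\<bar>(-1/4::real)^m / (2 * fact (2*m+1))\<bar> = (1/4)^m / (2 * fact (2*m+1))" by (simp add: power_abs)
  also have "\<dots> \<le> (1/4)^m / fact m"
  proof (intro divide_left_mono)
    have "fact m \<le> (fact (2*m+1) :: real)" by (rule fact_le_fact_2m(2))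
    moreover have "(0::real) \<le> fact (2*m+1)" by simp
    ultimately show "fact m \<le> 2 * (fact (2*m+1) :: real)" by linarith
  qed auto
  finally show "\<bar>(-1/4::real)^m / (2 * fact (2*m+1))\<bar> \<le> (1/4)^m / fact m" .
qed simp

lemma quarter_pow: "(-1/4::real)^n * T^n = (-1)^n * (T/4)^n"
proof -
  have e: "(-1/4::real) * T = (-1) * (T/4)" by simp
  show ?thesis by (simp only: power_mult_distrib[symmetric] e)
qed

lemma eval_Cf: assumes "T > 0" shows "eval_fps Cf T = cos (sqrt T / 2)"
proof (rule eval_fps_eqI)
  show "ereal (norm T) < fps_conv_radius Cf" by (simp add: Cf_radius)
  have "(\<lambda>n. (-1)^n / fact (2*n) * (sqrt T / 2) ^ (2*n)) sums cos (sqrt T / 2)" by (rule cos_paired)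
  moreover have "(-1)^n / fact (2*n) * (sqrt T / 2) ^ (2*n) = fps_nth Cf n * T ^ n" for n
  proof -
    have "(sqrt T / 2) ^ (2*n) = (T/4)^n" using assms by (simp add: power_mult power_divide)
    hence "(-1)^n / fact (2*n) * (sqrt T / 2) ^ (2*n) = ((-1)^n * (T/4)^n) / fact (2*n)" by simp
    also have "\<dots> = ((-1/4)^n * T^n) / fact (2*n)" by (simp only: quarter_pow)
    also have "\<dots> = fps_nth Cf n * T ^ n" by (simp add: Cf_def)
    finally show ?thesis .
  qed
  ultimately show "(\<lambda>n. fps_nth Cf n * T ^ n) sums cos (sqrt T / 2)" by simp
qed

lemma eval_Sf: assumes "T > 0" shows "eval_fps Sf T = sin (sqrt T / 2) / sqrt T"
proof (rule eval_fps_eqI)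
  show "ereal (norm T) < fps_conv_radius Sf" by (simp add: Sf_radius)
  have "(\<lambda>n. (-1)^n / fact (2*n+1) * (sqrt T / 2) ^ (2*n+1)) sums sin (sqrt T / 2)" by (rule sin_paired)
  hence "(\<lambda>n. (-1)^n / fact (2*n+1) * (sqrt T / 2) ^ (2*n+1) / sqrt T) sums (sin (sqrt T / 2) / sqrt T)"
    by (rule sums_divide)
  moreover have "(-1)^n / fact (2*n+1) * (sqrt T / 2) ^ (2*n+1) / sqrt T = fps_nth Sf n * T ^ n" for n
  proof -
    have "(sqrt T / 2) ^ (2*n+1) / sqrt T = (T/4)^n / 2" using assms by (simp add: power_mult power_divide)
    hence "(-1)^n / fact (2*n+1) * (sqrt T / 2) ^ (2*n+1) / sqrt T = (-1)^n / fact (2*n+1) * ((T/4)^n / 2)"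
      by (simp only: times_divide_eq_right[symmetric] mult.assoc)
    also have "(-1)^n / fact (2*n+1) * ((T/4)^n / 2) = ((-1)^n * (T/4)^n) / (2 * fact (2*n+1))"
      by simp
    also have "\<dots> = ((-1/4)^n * T^n) / (2 * fact (2*n+1))" by (simp only: quarter_pow)
    also have "\<dots> = fps_nth Sf n * T ^ n" by (simp add: Sf_def)
    finally show ?thesis .
  qed
  ultimately show "(\<lambda>n. fps_nth Sf n * T ^ n) sums (sin (sqrt T / 2) / sqrt T)" by simp
qed

lemma Wf_sums:
  assumes T: "0 < T" "T < (2*pi)^2"
  shows "(\<lambda>m. fps_nth Wf m * T ^ m) sums (sqrt T / 2 * cos (sqrt T / 2) / sin (sqrt T / 2))"
proof -
  define s where "s = sqrt T"
  define t where "t = s / (2*pi)"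
  have s: "0 < s" "s < 2*pi" using T by (auto simp: s_def real_sqrt_less_iff intro: real_less_lsqrt)
  have t: "0 < t" "t < 1" using s by (auto simp: t_def)
  have pit: "pi * t = s / 2" by (simp add: t_def)
  from zeta_gen_sums[OF t]
  have "(\<lambda>m. - (2 * riemann_zeta (real (2 * (m + 1))) * t ^ (2 * (m + 1)))) sums
          (- (1 - s / 2 * cos (s / 2) / sin (s / 2)))"
    unfolding pit mult.assoc[symmetric] by (intro sums_minus) (simp add: pit mult.assoc)
  moreover have "- (2 * riemann_zeta (real (2 * (m + 1))) * t ^ (2 * (m + 1))) =
                 fps_nth Wf (Suc m) * T ^ (Suc m)" for m
  proof -
    have "t ^ (2 * (m + 1)) = T ^ (m + 1) / (2*pi) ^ (2 * (m + 1))"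
      using T by (simp add: t_def s_def power_divide power_mult)
    thus ?thesis by (simp add: Wf_def)
  qed
  ultimately have "(\<lambda>m. fps_nth Wf (Suc m) * T ^ (Suc m)) sums (- (1 - s / 2 * cos (s / 2) / sin (s / 2)))"
    by simp
  from sums_Suc[OF this] show ?thesis by (simp add: Wf_def s_def)
qed

lemma Wf_radius: "fps_conv_radius Wf \<ge> ereal 1"
proof -
  have "(1::real) < (2*pi)^2"
  proof -
    have "(1::real) < 2 * pi" using pi_gt3 by simp
    thus ?thesis by (metis less_1_mult one_less_power pos2)
  qed
  hence "summable (\<lambda>m. fps_nth Wf m * 1 ^ m)" using Wf_sums[of 1] by (simp add: sums_iff)
  hence "conv_radius (fps_nth Wf) \<ge> norm (1::real)" by (rule conv_radius_geI)
  thus ?thesis unfolding fps_conv_radius_def by simp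
qed

lemma Wf_Sf: "Wf * Sf = fps_const (1/2) * Cf"
proof (rule fps_eq_pos[where \<delta>=1])
  show "ereal 1 \<le> fps_conv_radius (Wf * Sf)"
  proof -
    have "min (fps_conv_radius Wf) (fps_conv_radius Sf) = fps_conv_radius Wf" by (simp add: Sf_radius)
    thus ?thesis using Wf_radius fps_conv_radius_mult[of Wf Sf] by (metis order_trans)
  qed
  show "ereal 1 \<le> fps_conv_radius (fps_const (1/2) * Cf)"
    by (simp add: fps_conv_radius_cmult_left Cf_radius)
  fix T :: real assume T: "0 < T" "T < 1"
  have T1: "ereal (norm T) < fps_conv_radius Wf"
  proof -
    have "ereal (norm T) < ereal 1" using T by simp
    thus ?thesis using Wf_radius by (rule order.strict_trans2)
  qed
  have "T < (2*pi)^2"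
  proof -
    have "(1::real) < 2 * pi" using pi_gt3 by simp
    hence "(1::real) < (2*pi)^2" by (metis less_1_mult one_less_power pos2)
    thus ?thesis using T by simp
  qed
  hence eW: "eval_fps Wf T = sqrt T / 2 * cos (sqrt T / 2) / sin (sqrt T / 2)"
    using T by (intro eval_fps_eqI[OF T1] Wf_sums) auto
  have sinnz: "sin (sqrt T / 2) \<noteq> 0"
  proof -
    have "sqrt T < 1" using T by (metis real_sqrt_less_iff real_sqrt_one)
    hence "sqrt T / 2 < pi" using pi_gt3 by linarith
    moreover have "0 < sqrt T / 2" using T by simp
    ultimately have "sin (sqrt T / 2) > 0" by (intro sin_gt_zero)
    thus ?thesis by simp
  qed
  have "eval_fps (Wf * Sf) T = eval_fps Wf T * eval_fps Sf T"
    by (intro eval_fps_mult T1) (simp add: Sf_radius)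
  also have "\<dots> = cos (sqrt T / 2) / 2" using T sinnz by (simp add: eW eval_Sf field_simps)
  also have "\<dots> = eval_fps (fps_const (1/2) * Cf) T"
    by (subst eval_fps_mult) (use T in \<open>simp_all add: Cf_radius eval_Cf\<close>)
  finally show "eval_fps (Wf * Sf) T = eval_fps (fps_const (1/2) * Cf) T" .
qed simp

definition S1 :: "real fps" where "S1 = Abs_fps (\<lambda>m. 1 / fact (2*m+1))"
definition cc :: "nat \<Rightarrow> real" where "cc l = fps_nth (inverse S1) l"
definition Sy :: "real \<Rightarrow> real fps" where "Sy r = Abs_fps (\<lambda>m. r^m / fact (2*m+1))"
definition Fy :: "real \<Rightarrow> real fps" where "Fy y = Abs_fps (\<lambda>m. ((y+4)^m - y^m) / (4^m * fact (2*m)))"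
definition A0 :: "nat \<Rightarrow> nat \<Rightarrow> real" where
  "A0 n k = (if n = 0 \<or> n \<le> k then 0 else
     fact (2*n) / 4^k * (\<Sum>l\<le>k. cc l * real ((n-l) choose (k-l)) / fact (2*(n-l))))"

lemma inv_Sy: "inverse (Sy r) = Abs_fps (\<lambda>l. cc l * r^l)"
proof (rule fps_inverse_unique)
  have S1i: "S1 * inverse S1 = 1"
    using inverse_mult_eq_1[of S1] by (simp add: S1_def mult.commute)
  show "Sy r * Abs_fps (\<lambda>l. cc l * r^l) = 1"
  proof (rule fps_ext)
    fix n :: nat
    have "fps_nth (Sy r * Abs_fps (\<lambda>l. cc l * r^l)) n =
          (\<Sum>i=0..n. r^i / fact (2*i+1) * (cc (n-i) * r^(n-i)))"
      by (simp add: fps_mult_nth Sy_def)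
    also have "\<dots> = r^n * (\<Sum>i=0..n. fps_nth S1 i * fps_nth (inverse S1) (n-i))"
      unfolding sum_distrib_left
      by (intro sum.cong refl) (auto simp: S1_def cc_def power_add[symmetric])
    also have "(\<Sum>i=0..n. fps_nth S1 i * fps_nth (inverse S1) (n-i)) = fps_nth (S1 * inverse S1) n"
      by (simp add: fps_mult_nth)
    also have "\<dots> = fps_nth 1 n" by (simp add: S1i)
    finally show "fps_nth (Sy r * Abs_fps (\<lambda>l. cc l * r^l)) n = fps_nth 1 n"
      by (cases n) auto
  qed
qed

lemma diff_pow_binomial:
  fixes y :: real
  shows "(y+4)^m - y^m = (\<Sum>j<m. real (m choose j) * y^j * 4^(m-j))"
proof -
  have "(y+4)^m = (\<Sum>j\<le>m. real (m choose j) * y^j * 4^(m-j))" by (rule binomial_ring)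
  also have "\<dots> = (\<Sum>j<m. real (m choose j) * y^j * 4^(m-j)) + y^m"
    by (simp add: lessThan_Suc_atMost[symmetric])
  finally show ?thesis by simp
qed

lemma coeff_H:
  fixes y :: real
  shows "fps_nth (inverse (Sy (y/4)) * Fy y) n = (\<Sum>k<n. A0 n k * y^k) / fact (2*n)"
proof -
  define \<phi> where "\<phi> l j = cc l * real ((n-l) choose j) * y^(l+j) / 4^(l+j) / fact (2*(n-l))" for l j
  have "fps_nth (inverse (Sy (y/4)) * Fy y) n =
        (\<Sum>i=0..n. cc i * (y/4)^i * (((y+4)^(n-i) - y^(n-i)) / (4^(n-i) * fact (2*(n-i)))))"
    by (simp add: fps_mult_nth inv_Sy Fy_def)
  also have "\<dots> = (\<Sum>i\<le>n. \<Sum>j<n-i. \<phi> i j)"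
  proof (intro sum.cong)
    fix i assume i: "i \<in> {..n}"
    have "cc i * (y/4)^i * (((y+4)^(n-i) - y^(n-i)) / (4^(n-i) * fact (2*(n-i)))) =
          (\<Sum>j<n-i. cc i * (y/4)^i * (real ((n-i) choose j) * y^j * 4^((n-i)-j)) / (4^(n-i) * fact (2*(n-i))))"
      unfolding diff_pow_binomial by (simp add: sum_distrib_left sum_divide_distrib)
    also have "\<dots> = (\<Sum>j<n-i. \<phi> i j)"
    proof (intro sum.cong refl)
      fix j assume j: "j \<in> {..<n-i}"
      have e: "(4::real)^(n-i) = 4^((n-i)-j) * 4^j" using j by (simp add: power_add[symmetric])
      show "cc i * (y/4)^i * (real ((n-i) choose j) * y^j * 4^((n-i)-j)) / (4^(n-i) * fact (2*(n-i))) = \<phi> i j"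
        unfolding \<phi>_def e by (simp add: power_add power_divide field_simps)
    qed
    finally show "cc i * (y/4)^i * (((y+4)^(n-i) - y^(n-i)) / (4^(n-i) * fact (2*(n-i)))) = (\<Sum>j<n-i. \<phi> i j)" .
  qed (auto simp: atLeast0AtMost)
  also have "\<dots> = (\<Sum>(i,j)\<in>Sigma {..n} (\<lambda>i. {..<n-i}). \<phi> i j)"
    by (rule sum.Sigma) auto
  also have "Sigma {..n} (\<lambda>i. {..<n-i}) = {(i,j). i + j < n}" by auto
  also have "(\<Sum>(i,j)\<in>{(i,j). i + j < n}. \<phi> i j) = (\<Sum>k<n. \<Sum>i\<le>k. \<phi> i (k - i))"
    by (rule sum.triangle_reindex)
  also have "\<dots> = (\<Sum>k<n. A0 n k * y^k / fact (2*n))"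
  proof (intro sum.cong refl)
    fix k assume k: "k \<in> {..<n}"
    have "A0 n k * y^k / fact (2*n) = y^k / 4^k * (\<Sum>l\<le>k. cc l * real ((n-l) choose (k-l)) / fact (2*(n-l)))"
      using k by (simp add: A0_def)
    also have "\<dots> = (\<Sum>i\<le>k. \<phi> i (k - i))"
      unfolding sum_distrib_left
    proof (intro sum.cong refl)
      fix i assume "i \<in> {..k}"
      hence "i + (k - i) = k" by simp
      thus "y^k / 4^k * (cc i * real ((n-i) choose (k-i)) / fact (2*(n-i))) = \<phi> i (k - i)"
        unfolding \<phi>_def by simp
    qed
    finally show "(\<Sum>i\<le>k. \<phi> i (k - i)) = A0 n k * y^k / fact (2*n)" ..
  qed
  also have "\<dots> = (\<Sum>k<n. A0 n k * y^k) / fact (2*n)" by (simp add: sum_divide_distrib)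
  finally show ?thesis .
qed

lemma Sy_radius: assumes "r \<ge> 0" shows "fps_conv_radius (Sy r) = \<infinity>"
  unfolding Sy_def
proof (rule fps_conv_radius_fact_bound[where B=r])
  fix m :: nat
  have "\<bar>r^m / fact (2*m+1)\<bar> = r^m / fact (2*m+1)" using assms by simp
  also have "\<dots> \<le> r^m / fact m"
    using assms by (intro divide_left_mono fact_le_fact_2m) auto
  finally show "\<bar>r^m / fact (2*m+1)\<bar> \<le> r^m / fact m" .
qed (use assms in simp)

lemma Fy_radius: assumes "y > 0" shows "fps_conv_radius (Fy y) = \<infinity>"
  unfolding Fy_def
proof (rule fps_conv_radius_fact_bound[where B="(y+4)/4"])
  fix m :: nat
  have a: "y^m \<le> (y+4)^m" using assms by (intro power_mono) auto
  have b: "0 \<le> y^m" using assms by simp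
  have "\<bar>((y+4)^m - y^m) / (4^m * fact (2*m))\<bar> = ((y+4)^m - y^m) / (4^m * fact (2*m))"
    using a by simp
  also have "\<dots> \<le> (y+4)^m / (4^m * fact (2*m))"
    using a b by (intro divide_right_mono) auto
  also have "\<dots> = ((y+4)/4)^m / fact (2*m)" by (simp add: power_divide)
  also have "\<dots> \<le> ((y+4)/4)^m / fact m"
    using assms by (intro divide_left_mono fact_le_fact_2m) auto
  finally show "\<bar>((y+4)^m - y^m) / (4^m * fact (2*m))\<bar> \<le> ((y+4)/4)^m / fact m" .
qed (use assms in simp)

lemma faulhaber_exists:
  fixes y :: real assumes y: "y > 0"
  shows "\<exists>e>0. \<forall>x. \<bar>x\<bar> < e \<longrightarrow>
          (\<lambda>n. \<Sum>k<n. x ^ (2 * n) / fact (2 * n) * A0 n k * y ^ k) sums faulhaber_gf x y"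
proof -
  define S where "S = Sy (y/4)"
  define F where "F = Fy y"
  define H where "H = inverse S * F"
  have S0: "fps_nth S 0 \<noteq> 0" by (simp add: S_def Sy_def)
  have SR: "fps_conv_radius S = \<infinity>" using y by (simp add: S_def Sy_radius)
  have FR: "fps_conv_radius F = \<infinity>" using y by (simp add: F_def Fy_radius)
  have iSR: "0 < fps_conv_radius (inverse S)" using S0 SR by (intro fps_conv_radius_inverse_pos) auto
  obtain r where r: "0 < ereal r" "ereal r < fps_conv_radius (inverse S)"
    using ereal_dense2[OF iSR] by blast
  have r0: "r > 0" using r(1) by simp
  show ?thesis
  proof (intro exI[of _ "sqrt r"] conjI allI impI)
    show "sqrt r > 0" using r0 by simp
    fix x :: real assume x: "\<bar>x\<bar> < sqrt r"
    define T where "T = x^2"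
    have T: "0 \<le> T" "T < r" using x r0 unfolding T_def
      by (auto simp: real_less_rsqrt abs_less_iff) (metis abs_less_iff real_sqrt_abs real_sqrt_less_iff power2_eq_square)
    have Ti: "ereal (norm T) < fps_conv_radius (inverse S)"
      using T r(2) by (metis abs_of_nonneg ereal_less_eq(3) less_imp_le order.strict_trans1 real_norm_def)
    have TS: "ereal (norm T) < fps_conv_radius S" "ereal (norm T) < fps_conv_radius F"
      by (simp_all add: SR FR)
    have HR: "ereal (norm T) < fps_conv_radius H"
    proof -
      have "min (fps_conv_radius (inverse S)) (fps_conv_radius F) = fps_conv_radius (inverse S)"
        by (simp add: FR)
      thus ?thesis using fps_conv_radius_mult[of "inverse S" F] Ti unfolding H_def
        by (metis order.strict_trans2)
    qed
    have series: "(\<lambda>n. \<Sum>k<n. x ^ (2 * n) / fact (2 * n) * A0 n k * y ^ k) = (\<lambda>n. fps_nth H n * T ^ n)"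
    proof
      fix n
      have "(\<Sum>k<n. x ^ (2 * n) / fact (2 * n) * A0 n k * y ^ k) = (\<Sum>k<n. T^n * (A0 n k * y^k / fact (2*n)))"
        by (intro sum.cong refl) (simp add: T_def power_mult)
      also have "\<dots> = T^n * ((\<Sum>k<n. A0 n k * y^k) / fact (2*n))"
        by (simp add: sum_distrib_left sum_divide_distrib)
      also have "\<dots> = fps_nth H n * T ^ n" by (simp add: H_def S_def F_def coeff_H)
      finally show "(\<Sum>k<n. x ^ (2 * n) / fact (2 * n) * A0 n k * y ^ k) = fps_nth H n * T ^ n" .
    qed
    have evH: "eval_fps H T = eval_fps (inverse S) T * eval_fps F T"
      unfolding H_def by (intro eval_fps_mult Ti TS)
    have inv1: "eval_fps (inverse S) T * eval_fps S T = 1"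
    proof -
      have "eval_fps (inverse S * S) T = eval_fps (inverse S) T * eval_fps S T"
        by (intro eval_fps_mult Ti TS)
      moreover have "inverse S * S = 1" using S0 by (rule inverse_mult_eq_1)
      ultimately show ?thesis by simp
    qed
    define u where "u = x * sqrt y / 2"
    define v where "v = x * sqrt (y + 4) / 2"
    have u2: "u^2 = y / 4 * T" using y by (simp add: u_def T_def power_mult_distrib power_divide)
    have v2: "v^2 = (y + 4) / 4 * T" using y by (simp add: v_def T_def power_mult_distrib power_divide)
    have evF: "eval_fps F T = cosh v - cosh u"
    proof (rule eval_fps_eqI[OF TS(2)])
      have "(\<lambda>m. v^(2*m) / fact (2*m) - u^(2*m) / fact (2*m)) sums (cosh v - cosh u)"
        by (intro sums_diff cosh_paired)
      moreover have "v^(2*m) / fact (2*m) - u^(2*m) / fact (2*m) = fps_nth F m * T^m" for m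
      proof -
        have a: "v^(2*m) = (y+4)^m * T^m / 4^m" unfolding power_mult v2 by (simp add: power_mult_distrib power_divide)
        have b: "u^(2*m) = y^m * T^m / 4^m" unfolding power_mult u2 by (simp add: power_mult_distrib power_divide)
        have c: "\<And>a b c d e :: real. a * e / d / c - b * e / d / c = (a - b) / (d * c) * e"
          by (simp add: diff_divide_distrib left_diff_distrib)
        show ?thesis unfolding a b F_def Fy_def fps_nth_Abs_fps mult.assoc[symmetric]
          by (rule c)
      qed
      ultimately show "(\<lambda>m. fps_nth F m * T^m) sums (cosh v - cosh u)" by simp
    qed
    show "(\<lambda>n. \<Sum>k<n. x ^ (2 * n) / fact (2 * n) * A0 n k * y ^ k) sums faulhaber_gf x y"
      unfolding series
    proof (cases "x = 0")
      case True
      hence "T = 0" by (simp add: T_def)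
      have "fps_nth H 0 = 0" by (simp add: H_def F_def Fy_def)
      with \<open>T = 0\<close> True show "(\<lambda>n. fps_nth H n * T ^ n) sums faulhaber_gf x y"
        by (simp add: faulhaber_gf_def)
    next
      case False
      have unz: "u \<noteq> 0" using False y by (simp add: u_def)
      have shnz: "sinh u \<noteq> 0" using unz by simp
      have evS: "eval_fps S T = sinh u / u"
      proof (rule eval_fps_eqI[OF TS(1)])
        have "(\<lambda>m. u^(2*m+1) / fact (2*m+1) / u) sums (sinh u / u)"
          by (intro sums_divide sinh_paired)
        moreover have "u^(2*m+1) / fact (2*m+1) / u = fps_nth S m * T^m" for m
        proof -
          have b: "u^(2*m) = y^m * T^m / 4^m" unfolding power_mult u2 by (simp add: power_mult_distrib power_divide)
          have "u^(2*m+1) / fact (2*m+1) / u = u^(2*m) / fact (2*m+1)" using unz by simp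
          also have "\<dots> = y^m / 4^m / fact (2*m+1) * T^m" unfolding b by simp
          also have "\<dots> = fps_nth S m * T^m" by (simp add: S_def Sy_def power_divide)
          finally show ?thesis .
        qed
        ultimately show "(\<lambda>m. fps_nth S m * T^m) sums (sinh u / u)" by simp
      qed
      have "eval_fps (inverse S) T = u / sinh u"
        using inv1 unz shnz unfolding evS by (simp add: field_simps)
      hence "eval_fps H T = faulhaber_gf x y"
        unfolding evH evF faulhaber_gf_def using shnz by (simp add: u_def v_def)
      thus "(\<lambda>n. fps_nth H n * T ^ n) sums faulhaber_gf x y"
        using sums_eval_fps[OF HR] by simp
    qed
  qed
qed

lemma poly_pos_zero:
  fixes c :: "nat \<Rightarrow> real"
  assumes "\<And>y. y > 0 \<Longrightarrow> (\<Sum>k<n. c k * y^k) = 0" "k < n"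
  shows "c k = 0"
proof -
  define c' where "c' i = (if i < n then c i else 0)" for i
  have "{0<..<1::real} \<subseteq> {y. (\<Sum>i\<le>n. c' i * y^i) = 0}"
  proof
    fix y :: real assume "y \<in> {0<..<1}"
    hence "(\<Sum>k<n. c k * y^k) = 0" using assms(1) by auto
    moreover have "(\<Sum>i\<le>n. c' i * y^i) = (\<Sum>k<n. c k * y^k)"
      by (simp add: c'_def lessThan_Suc_atMost[symmetric])
    ultimately show "y \<in> {y. (\<Sum>i\<le>n. c' i * y^i) = 0}" by simp
  qed
  hence "infinite {y. (\<Sum>i\<le>n. c' i * y^i) = 0}" using infinite_Ioo_iff[of "0::real" 1]
    by (metis finite_subset zero_less_one)
  hence "\<not> (\<exists>i\<le>n. c' i \<noteq> 0)" using polyfun_finite_roots[of c' n] by blast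
  hence "c' k = 0" using assms(2) by auto
  thus ?thesis using assms(2) by (simp add: c'_def)
qed

lemma faulhaber_A_eq: "faulhaber_A = A0"
  unfolding faulhaber_A_def
proof (rule the_equality)
  show "(\<forall>n k. (n = 0 \<or> n \<le> k) \<longrightarrow> A0 n k = 0) \<and>
    (\<forall>y>0. \<exists>e>0. \<forall>x. \<bar>x\<bar> < e \<longrightarrow>
      (\<lambda>n. \<Sum>k<n. x ^ (2 * n) / fact (2 * n) * A0 n k * y ^ k) sums faulhaber_gf x y)"
    using faulhaber_exists by (auto simp: A0_def)
next
  fix A assume PA: "(\<forall>n k. (n = 0 \<or> n \<le> k) \<longrightarrow> A n k = 0) \<and>
    (\<forall>y>0. \<exists>e>0. \<forall>x. \<bar>x\<bar> < e \<longrightarrow>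
      (\<lambda>n. \<Sum>k<n. x ^ (2 * n) / fact (2 * n) * A n k * y ^ k) sums faulhaber_gf x y)"
  have zero: "(\<Sum>k<n. (A n k - A0 n k) * y^k) = 0" if y: "y > 0" for n y
  proof -
    obtain e1 where e1: "e1 > 0" "\<And>x. \<bar>x\<bar> < e1 \<Longrightarrow>
        (\<lambda>n. \<Sum>k<n. x ^ (2 * n) / fact (2 * n) * A n k * y ^ k) sums faulhaber_gf x y"
      using PA y by blast
    obtain e2 where e2: "e2 > 0" "\<And>x. \<bar>x\<bar> < e2 \<Longrightarrow>
        (\<lambda>n. \<Sum>k<n. x ^ (2 * n) / fact (2 * n) * A0 n k * y ^ k) sums faulhaber_gf x y"
      using faulhaber_exists[OF y] by blast
    define d where "d n = (\<Sum>k<n. (A n k - A0 n k) * y^k) / fact (2*n)" for n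
    have "d n = 0"
    proof (rule powser_zero_unique[where \<delta>="(min e1 e2)^2"])
      show "(min e1 e2)^2 > 0" using e1 e2 by simp
      fix T :: real assume T: "0 < T" "T < (min e1 e2)^2"
      define x where "x = sqrt T"
      have x: "\<bar>x\<bar> < e1" "\<bar>x\<bar> < e2"
        using T e1 e2 unfolding x_def by (auto simp: real_sqrt_less_iff real_less_lsqrt)
          (metis abs_of_pos min_less_iff_conj real_sqrt_abs real_sqrt_less_iff)+
      have "(\<lambda>n. (\<Sum>k<n. x ^ (2 * n) / fact (2 * n) * A n k * y ^ k) -
                 (\<Sum>k<n. x ^ (2 * n) / fact (2 * n) * A0 n k * y ^ k)) sums
            (faulhaber_gf x y - faulhaber_gf x y)"
        by (intro sums_diff e1(2) e2(2) x)
      moreover have "(\<Sum>k<n. x ^ (2 * n) / fact (2 * n) * A n k * y ^ k) -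
                 (\<Sum>k<n. x ^ (2 * n) / fact (2 * n) * A0 n k * y ^ k) = d n * T^n" for n
      proof -
        have xT: "x ^ (2 * n) = T^n" using T by (simp add: x_def power_mult)
        have "(\<Sum>k<n. x ^ (2 * n) / fact (2 * n) * A n k * y ^ k) -
                 (\<Sum>k<n. x ^ (2 * n) / fact (2 * n) * A0 n k * y ^ k) =
              (\<Sum>k<n. x ^ (2 * n) / fact (2 * n) * A n k * y ^ k - x ^ (2 * n) / fact (2 * n) * A0 n k * y ^ k)"
          by (simp only: sum_subtractf)
        also have "\<dots> = (\<Sum>k<n. T^n * ((A n k - A0 n k) * y^k / fact (2*n)))"
          unfolding xT by (intro sum.cong refl) (simp add: field_simps)
        also have "\<dots> = T^n * d n" unfolding d_def sum_divide_distrib[symmetric] sum_distrib_left[symmetric] ..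
        finally show ?thesis by simp
      qed
      ultimately show "(\<lambda>n. d n * T ^ n) sums 0" by simp
    qed
    thus ?thesis by (simp add: d_def)
  qed
  show "A = A0"
  proof (intro ext)
    fix n k
    show "A n k = A0 n k"
    proof (cases "n = 0 \<or> n \<le> k")
      case True thus ?thesis using PA by (auto simp: A0_def)
    next
      case False
      hence "k < n" by simp
      thus ?thesis using poly_pos_zero[where n=n and c="\<lambda>k. A n k - A0 n k" and k=k] zero by auto
    qed
  qed
qed

definition th :: "real fps \<Rightarrow> real fps" where "th F = fps_X * fps_deriv F"

lemma th_nth [simp]: "fps_nth (th F) n = real n * fps_nth F n"
  by (cases n) (simp_all add: th_def fps_X_mult_nth)

lemma th_mult: "th (F * G) = th F * G + F * th G"
  by (simp add: th_def fps_deriv_mult algebra_simps)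

lemma th_Cf: "th Cf = - (fps_const (1/4) * fps_X * Sf)"
proof (rule fps_ext)
  fix p :: nat
  show "fps_nth (th Cf) p = fps_nth (- (fps_const (1/4) * fps_X * Sf)) p"
  proof (cases p)
    case 0 thus ?thesis by (simp add: Cf_def)
  next
    case (Suc q)
    define F where "F = (fact (2*q+1) :: real)"
    have F: "F > 0" "2 * real q + 2 > 0" by (simp_all add: F_def)
    have "fps_nth (th Cf) p = real (Suc q) * ((-1/4)^(Suc q) / fact (2 * Suc q))"
      by (simp add: Cf_def Suc)
    also have "fact (2 * Suc q) = 2 * real (Suc q) * F"
      unfolding F_def by (simp add: algebra_simps)
    also have "real (Suc q) * ((-1/4)^(Suc q) / (2 * real (Suc q) * F)) =
               (-1/4)^(Suc q) / (2 * F)"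
    proof -
      have gen: "\<And>a b F :: real. a \<noteq> 0 \<Longrightarrow> F \<noteq> 0 \<Longrightarrow> a * (b / (2 * a * F)) = b / (2 * F)"
        by (simp add: field_simps)
      show ?thesis using F by (intro gen) auto
    qed
    also have "\<dots> = - (1/4 * ((-1/4)^q / (2 * F)))" by simp
    also have "\<dots> = fps_nth (- (fps_const (1/4) * fps_X * Sf)) p"
      by (simp add: Suc Sf_def mult.assoc fps_X_mult_nth F_def)
    finally show ?thesis .
  qed
qed

lemma th_Sf: "th Sf = fps_const (1/4) * Cf - fps_const (1/2) * Sf"
proof (rule fps_ext)
  fix m :: nat
  define F where "F = (fact (2*m) :: real)"
  have F: "F > 0" "2 * real m + 1 > 0" by (simp_all add: F_def)
  have e: "fact (2*m+1) = (2 * real m + 1) * F" by (simp add: F_def)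
  have gen: "\<And>a c F :: real. a \<ge> 0 \<Longrightarrow> F > 0 \<Longrightarrow>
     a * (c / (2 * ((2 * a + 1) * F))) = 1/4 * (c / F) - 1/2 * (c / (2 * ((2 * a + 1) * F)))"
  proof -
    fix a c F :: real assume assms: "a \<ge> 0" "F > 0"
    define u where "u = c / (2 * ((2 * a + 1) * F))"
    have nz: "2 * ((2 * a + 1) * F) \<noteq> 0" using assms by (auto simp: add_nonneg_eq_0_iff)
    have "c = u * (2 * ((2 * a + 1) * F))" using nz by (simp add: u_def)
    hence "c / F = 2 * (2 * a + 1) * u" using assms by (simp add: field_simps)
    thus "a * (c / (2 * ((2 * a + 1) * F))) = 1/4 * (c / F) - 1/2 * (c / (2 * ((2 * a + 1) * F)))"
      unfolding u_def[symmetric] by (simp add: algebra_simps)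
  qed
  have "real m * ((-1/4)^m / (2 * ((2 * real m + 1) * F))) =
         1/4 * ((-1/4)^m / F) - 1/2 * ((-1/4)^m / (2 * ((2 * real m + 1) * F)))"
    using F by (intro gen) auto
  moreover have L: "fps_nth (th Sf) m = real m * ((-1/4)^m / (2 * fact (2*m+1)))" by (simp add: Sf_def)
  moreover have R: "fps_nth (fps_const (1/4) * Cf - fps_const (1/2) * Sf) m =
     1/4 * ((-1/4)^m / fact (2*m)) - 1/2 * ((-1/4)^m / (2 * fact (2*m+1)))" by (simp add: Sf_def Cf_def)
  ultimately show "fps_nth (th Sf) m = fps_nth (fps_const (1/4) * Cf - fps_const (1/2) * Sf) m"
    unfolding e F_def by simp
qed

definition Df :: "nat \<Rightarrow> real fps" where
  "Df K = Abs_fps (\<lambda>p. real (p choose K) * (-1/4)^p / fact (2*p))"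

lemma binom_th: "p * (p choose K) = (Suc K) * (p choose Suc K) + K * (p choose K)"
proof -
  have e: "Suc K * (p choose Suc K) = (p - K) * (p choose K)"
    using binomial_absorption[of K p] binomial_absorb_comp[of p K] by simp
  show ?thesis
  proof (cases "K \<le> p")
    case True
    hence "p = (p - K) + K" by simp
    hence "p * (p choose K) = (p - K) * (p choose K) + K * (p choose K)"
      by (metis add_mult_distrib)
    thus ?thesis using e by simp
  next
    case False thus ?thesis by (simp add: binomial_eq_0)
  qed
qed

lemma th_Df: "th (Df K) = fps_const (real K + 1) * Df (Suc K) + fps_const (real K) * Df K"
proof (rule fps_ext)
  fix p :: nat
  have "real p * real (p choose K) = (real K + 1) * real (p choose Suc K) + real K * real (p choose K)"
    using binom_th[of p K] by (metis of_nat_add of_nat_mult of_nat_Suc add.commute)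
  hence h: "real p * real (p choose K) = (real K + 1) * real (p choose Suc K) + real K * real (p choose K)" .
  define d where "d = (-1/4::real)^p / fact (2*p)"
  have "real p * (real (p choose K) * d) = (real p * real (p choose K)) * d" by simp
  also have "\<dots> = ((real K + 1) * real (p choose Suc K) + real K * real (p choose K)) * d" by (simp only: h)
  also have "\<dots> = (real K + 1) * (real (p choose Suc K) * d) + real K * (real (p choose K) * d)"
    by (simp add: algebra_simps)
  finally have "real p * (real (p choose K) * (-1/4)^p / fact (2*p)) =
         (real K + 1) * (real (p choose Suc K) * (-1/4)^p / fact (2*p)) +
         real K * (real (p choose K) * (-1/4)^p / fact (2*p))"
    unfolding d_def by simp
  thus "fps_nth (th (Df K)) p = fps_nth (fps_const (real K + 1) * Df (Suc K) + fps_const (real K) * Df K) p"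
    by (simp add: Df_def)
qed

lemma Df0: "Df 0 = Cf" by (simp add: Df_def Cf_def)

definition gK :: "nat \<Rightarrow> nat \<Rightarrow> real" where
  "gK K i = (if 1 \<le> i \<and> i \<le> K then fact (2*K-1-i) / (4^K * fact K * fact (K-i) * fact (i-1)) else 0)"

lemma gK_ab: "gK (a+b+1) (b+1) = fact (2*a+b) / (4^(a+b+1) * fact (a+b+1) * fact a * fact b)"
proof -
  have "2*(a+b+1)-1-(b+1) = 2*a+b" by simp
  thus ?thesis by (simp add: gK_def ac_simps)
qed

lemma gen1: fixes c N M F Q :: real assumes "c \<noteq> 0" "M \<noteq> 0" "Q \<noteq> 0"
  shows "c * (N * F / (c * M * Q)) = N / M * (F / Q)"
  using assms by (simp add: field_simps)

lemma gen2: fixes a b :: real assumes "a \<ge> 0" "b \<ge> 0"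
  shows "(2*a+b+2)*(2*a+b+1) / (4*(a+1)) = ((a+b+1) - (b+1)/2) + (2*a+b+1)*b/(a+1)/4"
proof -
  have n1: "a + 1 \<noteq> 0" using assms by auto
  show ?thesis using n1 by (simp add: divide_simps) (simp add: algebra_simps)
qed

lemma gen3: fixes F P B A fb c :: real assumes "P \<noteq> 0" "B \<noteq> 0" "fb \<noteq> 0" "A \<noteq> 0"
  shows "c * F / (P * A * fb) = c * B / A * (F / (P * (B * fb)))"
  using assms by (simp add: field_simps)

lemma gK_rec:
  assumes "K \<ge> 1" "i \<ge> 1"
  shows "(real K + 1) * gK (K+1) i = (real K - real i / 2) * gK K i + gK K (i-1) / 4"
proof (cases "i \<le> K")
  case True
  obtain a b where ab: "K = a+b+1" "i = b+1" using True assms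
    by (metis add.commute le_add_diff_inverse le_add_diff_inverse2 Nat.add_diff_assoc2)
  define F0 where "F0 = (fact (2*a+b) :: real)"
  define P where "P = (4::real)^(a+b+1) * fact (a+b+1) * fact a"
  define z where "z = F0 / (P * fact b)"
  have F0: "F0 > 0" by (simp add: F0_def)
  have P: "P > 0" by (simp add: P_def)
  have L1: "(real K + 1) * gK (K+1) i = (2*real a+real b+2)*(2*real a+real b+1) / (4*(real a+1)) * z"
  proof -
    have "gK (K+1) i = gK ((a+1)+b+1) (b+1)" using ab by (simp add: ac_simps)
    also have "\<dots> = fact (2*(a+1)+b) / (4^((a+1)+b+1) * fact ((a+1)+b+1) * fact (a+1) * fact b)"
      by (rule gK_ab)
    also have "fact (2*(a+1)+b) = (2*real a+real b+2)*(2*real a+real b+1)*F0"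
    proof -
      have "2*(a+1)+b = Suc (Suc (2*a+b))" by simp
      thus ?thesis by (simp add: F0_def algebra_simps)
    qed
    also have "(4::real)^((a+1)+b+1) * fact ((a+1)+b+1) * fact (a+1) * fact b =
               (real K + 1) * (4 * (real a+1)) * (P * fact b)"
    proof -
      have "(a+1)+b+1 = Suc (a+b+1)" by simp
      thus ?thesis using ab by (simp add: P_def algebra_simps)
    qed
    finally have "gK (K+1) i = (2*real a+real b+2)*(2*real a+real b+1)*F0 /
                    ((real K + 1) * (4 * (real a+1)) * (P * fact b))" .
    thus ?thesis unfolding z_def using P by (simp only: gen1) (simp add: gen1)
  qed
  have L2: "gK K i = z"
    using gK_ab[of a b] ab by (simp add: F0_def P_def z_def)
  have L3: "gK K (i-1) = (2*real a+real b+1) * real b / (real a + 1) * z"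
  proof (cases b)
    case 0
    thus ?thesis using ab by (simp add: gK_def)
  next
    case (Suc b')
    have "gK K (i-1) = gK ((a+1)+b'+1) (b'+1)" using ab Suc by (simp add: ac_simps)
    also have "\<dots> = fact (2*(a+1)+b') / (4^((a+1)+b'+1) * fact ((a+1)+b'+1) * fact (a+1) * fact b')"
      by (rule gK_ab)
    also have "fact (2*(a+1)+b') = (2*real a+real b+1)*F0"
    proof -
      have "2*(a+1)+b' = Suc (2*a+b)" using Suc by simp
      thus ?thesis using Suc by (simp add: F0_def algebra_simps)
    qed
    also have "(4::real)^((a+1)+b'+1) * fact ((a+1)+b'+1) * fact (a+1) * fact b' =
               P * (real a+1) * fact b'"
    proof -
      have "(a+1)+b'+1 = Suc a + b" using Suc by simp
      thus ?thesis by (simp add: P_def algebra_simps)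
    qed
    also have "(2*real a+real b+1)*F0 / (P * (real a+1) * fact b') =
               (2*real a+real b+1) * real b / (real a + 1) * (F0 / (P * (real b * fact b')))"
      using P Suc by (intro gen3) auto
    also have "real b * fact b' = fact b" using Suc by simp
    finally show ?thesis by (simp add: z_def)
  qed
  have co: "(2*real a+real b+2)*(2*real a+real b+1) / (4*(real a+1)) =
            (real K - real i / 2) + (2*real a+real b+1) * real b / (real a + 1) / 4"
    using gen2[of "real a" "real b"] ab by simp
  show ?thesis unfolding L1 L2 L3 co by (simp add: algebra_simps)
next
  case False
  show ?thesis
  proof (cases "i = K + 1")
    case True
    obtain K' where K': "K = Suc K'" using assms by (cases K) auto
    have "gK (K+1) i = fact K / (4^(K+1) * fact (K+1) * fact K)" using True assms
      by (simp add: gK_def)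
    also have "\<dots> = 1 / (4^(K+1) * fact (K+1))" by simp
    finally have a1: "gK (K+1) i = 1 / (4^(K+1) * fact (K+1))" .
    have a2: "gK K i = 0" using True by (simp add: gK_def)
    have "gK K (i-1) = fact K' / (4^K * fact K * fact K')" using True assms K'
      by (simp add: gK_def)
    also have "\<dots> = 1 / (4^K * fact K)" by simp
    finally have a3: "gK K (i-1) = 1 / (4^K * fact K)" .
    have gen: "\<And>c X f :: real. c \<noteq> 0 \<Longrightarrow> X \<noteq> 0 \<Longrightarrow> f \<noteq> 0 \<Longrightarrow>
       c * (1 / ((4 * X) * (c * f))) = 1 / (X * f) / 4"
      by (simp add: field_simps)
    have "(fact (K+1)::real) = (real K + 1) * fact K" by simp
    moreover have "(4::real)^(K+1) = 4 * 4^K" by simp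
    ultimately have "(real K + 1) * (1 / (4^(K+1) * fact (K+1))) = 1 / (4^K * fact K) / 4"
      by (simp only:) (intro gen; simp)
    thus ?thesis unfolding a1 a2 a3 by simp
  next
    case False
    with \<open>\<not> i \<le> K\<close> show ?thesis by (auto simp: gK_def)
  qed
qed

definition af :: "nat \<Rightarrow> real fps" where
  "af K = Abs_fps (\<lambda>j. if j = 0 then 0 else (-1)^(K+j) * gK K (2*j))"
definition bf :: "nat \<Rightarrow> real fps" where
  "bf K = Abs_fps (\<lambda>j. if j = 0 then 0 else (-1)^(K+j+1) * gK K (2*j-1))"

lemma af_rec:
  assumes "K \<ge> 1"
  shows "fps_const (real K + 1) * af (K+1) = th (af K) - fps_const (real K) * af K + fps_const (1/4) * bf K"
proof (rule fps_ext)
  fix j :: nat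
  show "fps_nth (fps_const (real K + 1) * af (K+1)) j =
        fps_nth (th (af K) - fps_const (real K) * af K + fps_const (1/4) * bf K) j"
  proof (cases "j = 0")
    case True thus ?thesis by (simp add: af_def bf_def)
  next
    case False
    define s where "s = (-1::real)^(K+j)"
    have r: "(real K + 1) * gK (K+1) (2*j) = (real K - real j) * gK K (2*j) + gK K (2*j-1) / 4"
      using gK_rec[OF assms, of "2*j"] False by simp
    have s1: "(-1::real)^(K+1+j) = - s" "(-1::real)^(K+j+1) = - s" by (simp_all add: s_def)
    have "fps_nth (fps_const (real K + 1) * af (K+1)) j = - s * ((real K + 1) * gK (K+1) (2*j))"
      using False by (simp add: af_def s1 s_def)
    also have "\<dots> = real j * (s * gK K (2*j)) - real K * (s * gK K (2*j)) + 1/4 * (- s * gK K (2*j-1))"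
      unfolding r by (simp add: algebra_simps)
    also have "\<dots> = fps_nth (th (af K) - fps_const (real K) * af K + fps_const (1/4) * bf K) j"
      using False by (simp add: af_def bf_def s_def s1)
    finally show ?thesis .
  qed
qed

lemma bf_rec:
  assumes "K \<ge> 1"
  shows "fps_const (real K + 1) * bf (K+1) = th (bf K) - fps_const (1/2) * bf K - fps_const (real K) * bf K
           - fps_const (1/4) * fps_X * af K"
proof (rule fps_ext)
  fix j :: nat
  show "fps_nth (fps_const (real K + 1) * bf (K+1)) j =
        fps_nth (th (bf K) - fps_const (1/2) * bf K - fps_const (real K) * bf K
           - fps_const (1/4) * fps_X * af K) j"
  proof (cases "j = 0")
    case True thus ?thesis by (simp add: af_def bf_def)
  next
    case False
    define s where "s = (-1::real)^(K+j)"
    have r: "(real K + 1) * gK (K+1) (2*j-1) = (real K - real j + 1/2) * gK K (2*j-1) + gK K (2*j-2) / 4"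
    proof -
      have "real (2*j-1) = 2 * real j - 1" using False by (simp add: of_nat_diff)
      moreover have "2*j-1-1 = 2*j-2" by simp
      ultimately show ?thesis using gK_rec[OF assms, of "2*j-1"] False by (simp add: field_simps)
    qed
    have s1: "(-1::real)^(K+1+j+1) = s" "(-1::real)^(K+j+1) = - s" by (simp_all add: s_def)
    have am: "fps_nth (af K) (j-1) = - s * gK K (2*j-2)"
    proof (cases "j = 1")
      case True thus ?thesis by (simp add: af_def gK_def)
    next
      case False
      with \<open>j \<noteq> 0\<close> obtain j' where j': "j = Suc (Suc j')" by (cases j; cases "j-1") auto
      have "(-1::real)^(K + Suc j') = - s" by (simp add: s_def j')
      thus ?thesis using j' by (simp add: af_def)
    qed
    have "fps_nth (fps_const (real K + 1) * bf (K+1)) j = s * ((real K + 1) * gK (K+1) (2*j-1))"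
      using False by (simp add: bf_def s1 s_def)
    also have "\<dots> = real j * (- s * gK K (2*j-1)) - 1/2 * (- s * gK K (2*j-1)) - real K * (- s * gK K (2*j-1))
                    - 1/4 * fps_nth (af K) (j-1)"
      unfolding r am by (simp add: algebra_simps)
    also have "\<dots> = fps_nth (th (bf K) - fps_const (1/2) * bf K - fps_const (real K) * bf K
           - fps_const (1/4) * fps_X * af K) j"
      using False by (simp add: bf_def s1 s_def mult.assoc fps_X_mult_nth)
    finally show ?thesis .
  qed
qed

lemma Df1: "Df 1 = - (fps_const (1/4) * fps_X * Sf)"
proof -
  have "th (Df 0) = fps_const 1 * Df 1 + fps_const 0 * Df 0" using th_Df[of 0] by simp
  thus ?thesis by (simp add: Df0 th_Cf)
qed

lemma af1: "af 1 = 0"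
  by (rule fps_ext) (auto simp: af_def gK_def)

lemma bf1: "bf 1 = - (fps_const (1/4) * fps_X)"
proof (rule fps_ext)
  fix j :: nat
  show "fps_nth (bf 1) j = fps_nth (- (fps_const (1/4) * fps_X)) j"
    by (cases "j = 1") (auto simp: bf_def gK_def)
qed

lemma th_add: "th (F + G) = th F + th G"
  by (simp add: th_def algebra_simps)

lemma Df_decomp: assumes "K \<ge> 1" shows "Df K = af K * Cf + bf K * Sf"
  using assms
proof (induction K rule: dec_induct)
  case base
  have "Df 1 = af 1 * Cf + bf 1 * Sf" unfolding Df1 af1 bf1 by (simp add: mult.assoc)
  thus ?case unfolding One_nat_def .
next
  case (step K)
  have "fps_const (real K + 1) * Df (K+1) = th (Df K) - fps_const (real K) * Df K"
    using th_Df[of K] by simp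
  also have "\<dots> = th (af K * Cf + bf K * Sf) - fps_const (real K) * (af K * Cf + bf K * Sf)"
    using step.IH by simp
  also have "\<dots> = (th (af K) - fps_const (real K) * af K + fps_const (1/4) * bf K) * Cf +
                  (th (bf K) - fps_const (1/2) * bf K - fps_const (real K) * bf K
                    - fps_const (1/4) * fps_X * af K) * Sf"
    by (simp add: th_add th_mult th_Cf th_Sf algebra_simps)
  also have "\<dots> = (fps_const (real K + 1) * af (K+1)) * Cf + (fps_const (real K + 1) * bf (K+1)) * Sf"
    unfolding af_rec[OF step.hyps(1)] bf_rec[OF step.hyps(1)] ..
  also have "\<dots> = fps_const (real K + 1) * (af (K+1) * Cf + bf (K+1) * Sf)"
    by (simp add: algebra_simps)
  finally have "fps_const (real K + 1) * Df (K+1) = fps_const (real K + 1) * (af (K+1) * Cf + bf (K+1) * Sf)" .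
  moreover have "fps_const (real K + 1) \<noteq> 0" by simp
  ultimately show ?case by simp
qed

definition Qf :: "real fps" where "Qf = inverse (Sy (-1/4))"

lemma Sf_Sy: "Sf = fps_const (1/2) * Sy (-1/4)"
  by (rule fps_ext) (simp add: Sf_def Sy_def)

lemma Qf_Sf: "Qf * Sf = fps_const (1/2)"
proof -
  have "Qf * Sy (-1/4) = 1" unfolding Qf_def by (rule inverse_mult_eq_1) (simp add: Sy_def)
  thus ?thesis unfolding Sf_Sy by (metis mult.left_commute mult.right_neutral)
qed

lemma Qf_Cf: "Qf * Cf = Wf"
proof -
  have "Cf = fps_const 2 * (Wf * Sf)" unfolding Wf_Sf by (simp add: fps_const_mult[symmetric] mult.assoc[symmetric])
  hence "Qf * Cf = fps_const 2 * Wf * (Qf * Sf)" by (simp add: ac_simps)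
  also have "\<dots> = Wf" unfolding Qf_Sf by (simp add: mult.assoc fps_const_mult[symmetric] mult.commute)
  finally show ?thesis .
qed

lemma Qf_Df: assumes "K \<ge> 1" shows "Qf * Df K = af K * Wf + fps_const (1/2) * bf K"
proof -
  have "Qf * Df K = af K * (Qf * Cf) + bf K * (Qf * Sf)"
    unfolding Df_decomp[OF assms] by (simp add: algebra_simps)
  also have "\<dots> = af K * Wf + bf K * fps_const (1/2)" unfolding Qf_Cf Qf_Sf ..
  finally show ?thesis by (simp only: mult.commute[of "bf K"])
qed

lemma Qf_nth: "fps_nth Qf l = cc l * (-1/4)^l"
  by (simp add: Qf_def inv_Sy)

lemma QDf_nth:
  "fps_nth (Qf * Df K) n = (-1/4)^n * (\<Sum>l=0..n. cc l * real ((n-l) choose K) / fact (2*(n-l)))"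
proof -
  have "fps_nth (Qf * Df K) n = (\<Sum>l=0..n. cc l * (-1/4)^l * (real ((n-l) choose K) * (-1/4)^(n-l) / fact (2*(n-l))))"
    by (simp add: fps_mult_nth Qf_nth Df_def)
  also have "\<dots> = (\<Sum>l=0..n. (-1/4)^n * (cc l * real ((n-l) choose K) / fact (2*(n-l))))"
  proof (intro sum.cong refl)
    fix l assume "l \<in> {0..n}"
    hence ln: "l + (n - l) = n" by simp
    have "(-1/4::real)^l * (-1/4)^(n-l) = (-1/4)^(l + (n-l))" by (rule power_add[symmetric])
    hence pw: "(-1/4::real)^l * (-1/4)^(n-l) = (-1/4)^n" unfolding ln .
    have "cc l * (-1/4)^l * (real ((n-l) choose K) * (-1/4)^(n-l) / fact (2*(n-l))) =
          ((-1/4::real)^l * (-1/4)^(n-l)) * (cc l * real ((n-l) choose K) / fact (2*(n-l)))"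
      by (simp add: mult_ac)
    thus "cc l * (-1/4)^l * (real ((n-l) choose K) * (-1/4)^(n-l) / fact (2*(n-l))) =
          (-1/4)^n * (cc l * real ((n-l) choose K) / fact (2*(n-l)))"
      unfolding pw .
  qed
  also have "\<dots> = (-1/4)^n * (\<Sum>l=0..n. cc l * real ((n-l) choose K) / fact (2*(n-l)))"
    by (simp add: sum_distrib_left)
  finally show ?thesis .
qed

lemma A0_QDf:
  assumes "1 \<le> k" "k \<le> n"
  shows "A0 n (n-k) = fact (2*n) / 4^(n-k) * (-4)^n * fps_nth (Qf * Df k) n"
proof -
  have nz: "\<not> (n = 0 \<or> n \<le> n - k)" using assms by auto
  have "(\<Sum>l\<le>n-k. cc l * real ((n-l) choose ((n-k)-l)) / fact (2*(n-l))) =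
        (\<Sum>l=0..n. cc l * real ((n-l) choose k) / fact (2*(n-l)))"
  proof -
    have "(\<Sum>l\<le>n-k. cc l * real ((n-l) choose ((n-k)-l)) / fact (2*(n-l))) =
          (\<Sum>l\<in>{0..n-k}. cc l * real ((n-l) choose k) / fact (2*(n-l)))"
    proof (intro sum.cong)
      fix l assume l: "l \<in> {0..n-k}"
      hence "(n-l) choose ((n-k)-l) = (n-l) choose k"
        using binomial_symmetric[of k "n-l"] assms by (auto simp: diff_diff_add add.commute)
      thus "cc l * real ((n-l) choose ((n-k)-l)) / fact (2*(n-l)) = cc l * real ((n-l) choose k) / fact (2*(n-l))"
        by simp
    qed (auto simp: atLeast0AtMost)
    also have "\<dots> = (\<Sum>l=0..n. cc l * real ((n-l) choose k) / fact (2*(n-l)))"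
    proof (rule sum.mono_neutral_left)
      show "\<forall>i\<in>{0..n} - {0..n-k}. cc i * real ((n-i) choose k) / fact (2*(n-i)) = 0"
        by (auto simp: binomial_eq_0)
    qed auto
    finally show ?thesis .
  qed
  moreover have e: "(-4::real)^n * (-1/4)^n = 1"
  proof -
    have "(-4::real)^n * (-1/4)^n = ((-4) * (-1/4))^n" by (rule power_mult_distrib[symmetric])
    thus ?thesis by simp
  qed
  ultimately show ?thesis
  proof -
    assume h: "(\<Sum>l\<le>n-k. cc l * real ((n-l) choose ((n-k)-l)) / fact (2*(n-l))) =
        (\<Sum>l=0..n. cc l * real ((n-l) choose k) / fact (2*(n-l)))"
    have "A0 n (n-k) = fact (2*n) / 4^(n-k) * (\<Sum>l=0..n. cc l * real ((n-l) choose k) / fact (2*(n-l)))"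
      using nz h unfolding A0_def by simp
    also have "\<dots> = fact (2*n) / 4^(n-k) * (((-4)^n * (-1/4)^n) * (\<Sum>l=0..n. cc l * real ((n-l) choose k) / fact (2*(n-l))))"
      unfolding e by simp
    also have "\<dots> = fact (2*n) / 4^(n-k) * (-4)^n * fps_nth (Qf * Df k) n"
      unfolding QDf_nth by (simp only: mult.assoc)
    finally show ?thesis .
  qed
qed

lemma final_gen:
  fixes sk sj p4 F2n Fk F1 Fa Fb Fc Z pw kk :: real
  assumes "sk * sk = 1" "p4 > 0" "Fk > 0" "F1 > 0" "Fb > 0" "Fc > 0" "pw > 0" "kk \<ge> 0"
  shows "(sk * p4 * F2n * Fk^2 / F1) * ((- (sk * sj)) * (Fa / (p4 * Fk * Fb * Fc)) * (-2 * Z / pw)) =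
         4 * F2n * ((kk+1) * Fk) / ((2*kk+2) * F1) * (sj * Fa / (Fb * Fc) * Z / pw)"
proof -
  have k: "2*kk+2 > 0" "kk + 1 > 0" using assms by auto
  have "(sk * p4 * F2n * Fk^2 / F1) * ((- (sk * sj)) * (Fa / (p4 * Fk * Fb * Fc)) * (-2 * Z / pw)) =
        2 * (sk * sk) * sj * F2n * Fk * Fa * Z / (F1 * Fb * Fc * pw)"
    using assms by (simp add: field_simps power2_eq_square)
  also have "\<dots> = 2 * sj * F2n * Fk * Fa * Z / (F1 * Fb * Fc * pw)" using assms by simp
  also have "\<dots> = (2 * F2n * Fk / F1) * (sj * Fa / (Fb * Fc) * Z / pw)"
    using assms by (simp add: field_simps)
  also have "2 * F2n * Fk / F1 = 4 * F2n * ((kk+1) * Fk) / ((2*kk+2) * F1)"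
  proof -
    have gen: "\<And>c. c \<noteq> 0 \<Longrightarrow> 2 * F2n * Fk / F1 = 4 * F2n * (c * Fk) / ((2*c) * F1)"
      using assms by (simp add: field_simps)
    have "2*kk+2 = 2*(kk+1)" by simp
    thus ?thesis using gen[of "kk+1"] k by simp
  qed
  finally show ?thesis .
qed

lemma QDf_coeff:
  assumes k: "2 \<le> k" "k \<le> n"
  shows "fps_nth (Qf * Df k) n = (\<Sum>j<k div 2. (-1)^(k+Suc j) * gK k (2*Suc j) *
            (-2 * riemann_zeta (real (2*(n - Suc j))) / (2*pi)^(2*(n - Suc j))))"
proof -
  have n0: "n \<noteq> 0" using k by simp
  have bf0: "fps_nth (bf k) n = 0"
    using k n0 by (auto simp: bf_def gK_def)
  have "fps_nth (Qf * Df k) n = fps_nth (af k * Wf) n"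
    using k by (simp add: Qf_Df bf0)
  also have "\<dots> = (\<Sum>i=0..n. fps_nth (af k) i * fps_nth Wf (n - i))" by (rule fps_mult_nth)
  also have "\<dots> = (\<Sum>i\<in>{1..k div 2}. fps_nth (af k) i * fps_nth Wf (n - i))"
  proof (rule sum.mono_neutral_right)
    show "{1..k div 2} \<subseteq> {0..n}" using k by auto
    show "\<forall>i\<in>{0..n} - {1..k div 2}. fps_nth (af k) i * fps_nth Wf (n - i) = 0"
    proof
      fix i assume "i \<in> {0..n} - {1..k div 2}"
      hence "i = 0 \<or> k < 2 * i" by auto
      thus "fps_nth (af k) i * fps_nth Wf (n - i) = 0" by (auto simp: af_def gK_def)
    qed
  qed auto
  also have "{1..k div 2} = Suc ` {..<k div 2}" by (auto simp: image_iff) (metis Suc_pred' less_eq_Suc_le lessThan_iff neq0_conv not_less_eq_eq)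
  also have "(\<Sum>i\<in>Suc ` {..<k div 2}. fps_nth (af k) i * fps_nth Wf (n - i)) =
             (\<Sum>j<k div 2. fps_nth (af k) (Suc j) * fps_nth Wf (n - Suc j))"
    by (subst sum.reindex) auto
  also have "\<dots> = (\<Sum>j<k div 2. (-1)^(k+Suc j) * gK k (2*Suc j) *
            (-2 * riemann_zeta (real (2*(n - Suc j))) / (2*pi)^(2*(n - Suc j))))"
  proof (intro sum.cong refl)
    fix j assume j: "j \<in> {..<k div 2}"
    hence "n - Suc j \<noteq> 0" using k by auto
    thus "fps_nth (af k) (Suc j) * fps_nth Wf (n - Suc j) = (-1)^(k+Suc j) * gK k (2*Suc j) *
            (-2 * riemann_zeta (real (2*(n - Suc j))) / (2*pi)^(2*(n - Suc j)))"
      by (simp add: af_def Wf_def)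
  qed
  finally show ?thesis .
qed

lemma b1_gen:
  fixes a b p q F G H Q :: real
  assumes "p \<noteq> 0"
  shows "a * (F / p * (a * b * (p * q)) * Q) * G / H = (a * a) * b * q * F * G / H * Q"
  using assms by (simp add: field_simps)

theorem mainTheorem3:
  fixes n k :: nat
  assumes "2 \<le> k" and "k \<le> n"
  shows "faulhaber_b n k =
    4 * Gamma (2 * real n + 1) * Gamma (real k + 2) / Gamma (2 * real k + 3) *
    (\<Sum>j = 0..<k div 2.
        (-1) ^ j * Gamma (2 * real k - 2 - 2 * real j)
          / (Gamma (real k - 1 - 2 * real j) * Gamma (2 * real j + 2))
        * riemann_zeta (2 * real n - 2 * real j - 2)
          / (2 * pi) ^ (2 * n - 2 * j - 2))"
proof -
  define QD where "QD = fps_nth (Qf * Df k) n"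
  define C0 :: real where "C0 = (-1)^k * 4^k * fact (2*n) * (fact k)^2 / fact (2*k+1)"
  have b1: "faulhaber_b n k = C0 * QD"
  proof -
    obtain m where m: "n = m + k" using assms(2) by (metis le_add_diff_inverse2)
    have nk: "n - k = m" using m by simp
    have "faulhaber_b n k = (-1)^(n-k) * (fact (2*n) / 4^(n-k) * (-4)^n * QD) * (fact k)^2 / fact (2*k+1)"
      unfolding faulhaber_b_def faulhaber_A_eq QD_def using A0_QDf[of k n] assms by simp
    also have "(-4::real)^n = (-1)^m * (-1)^k * (4^m * 4^k)"
      unfolding m by (simp add: power_add power_minus[of 4])
    also have "(-1::real)^(n-k) * (fact (2*n) / 4^(n-k) * ((-1)^m * (-1)^k * (4^m * 4^k)) * QD) * (fact k)^2 / fact (2*k+1)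
             = ((-1)^m * (-1)^m) * (-1)^k * 4^k * fact (2*n) * (fact k)^2 / fact (2*k+1) * QD"
      unfolding nk by (rule b1_gen) simp
    also have "(-1::real)^m * (-1)^m = 1" by (simp add: power_mult_distrib[symmetric])
    finally show ?thesis by (simp add: C0_def)
  qed
  have G1: "Gamma (2 * real n + 1) = fact (2*n)"
  proof -
    have e: "2 * real n + 1 = 1 + real (2*n)" by simp
    show ?thesis unfolding e by (rule Gamma_fact)
  qed
  have G2: "Gamma (real k + 2) = (real k + 1) * fact k"
  proof -
    have e: "real k + 2 = 1 + real (k+1)" by simp
    have "Gamma (real k + 2) = fact (k+1)" unfolding e by (rule Gamma_fact)
    thus ?thesis by (simp add: algebra_simps)
  qed
  have G3: "Gamma (2 * real k + 3) = (2 * real k + 2) * fact (2*k+1)"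
  proof -
    have e: "2 * real k + 3 = 1 + real (2*k+2)" by simp
    have "Gamma (2 * real k + 3) = fact (2*k+2)" unfolding e by (rule Gamma_fact)
    moreover have "fact (2*k+2) = (2 * real k + 2) * (fact (2*k+1) :: real)"
      using fact_Suc[of "2*k+1"] by (simp add: algebra_simps)
    ultimately show ?thesis by simp
  qed
  have trm: "C0 * ((-1)^(k+Suc j) * gK k (2*Suc j) *
            (-2 * riemann_zeta (real (2*(n - Suc j))) / (2*pi)^(2*(n - Suc j)))) =
        4 * Gamma (2 * real n + 1) * Gamma (real k + 2) / Gamma (2 * real k + 3) *
        ((-1) ^ j * Gamma (2 * real k - 2 - 2 * real j)
          / (Gamma (real k - 1 - 2 * real j) * Gamma (2 * real j + 2))
        * riemann_zeta (2 * real n - 2 * real j - 2)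
          / (2 * pi) ^ (2 * n - 2 * j - 2))" if j: "j < k div 2" for j
  proof -
    have jk: "2*j + 2 \<le> k" using j by linarith
    have Ga: "Gamma (2 * real k - 2 - 2 * real j) = fact (2*k-3-2*j)"
    proof -
      have e: "2 * real k - 2 - 2 * real j = 1 + real (2*k-3-2*j)" using jk by (simp add: of_nat_diff)
      show ?thesis unfolding e by (rule Gamma_fact)
    qed
    have Gb: "Gamma (real k - 1 - 2 * real j) = fact (k-2-2*j)"
    proof -
      have e: "real k - 1 - 2 * real j = 1 + real (k-2-2*j)" using jk by (simp add: of_nat_diff)
      show ?thesis unfolding e by (rule Gamma_fact)
    qed
    have Gc: "Gamma (2 * real j + 2) = fact (2*j+1)"
    proof -
      have e: "2 * real j + 2 = 1 + real (2*j+1)" by simp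
      show ?thesis unfolding e by (rule Gamma_fact)
    qed
    have Zeq: "riemann_zeta (2 * real n - 2 * real j - 2) = riemann_zeta (real (2*(n - Suc j)))"
    proof -
      have "Suc j \<le> n" using jk assms by simp
      hence e: "2 * real n - 2 * real j - 2 = real (2*(n - Suc j))" by (simp add: of_nat_diff algebra_simps)
      show ?thesis by (simp only: e)
    qed
    have Peq: "(2 * pi) ^ (2 * n - 2 * j - 2) = (2*pi)^(2*(n - Suc j))"
    proof -
      have "2 * n - 2 * j - 2 = 2*(n - Suc j)" by simp
      thus ?thesis by simp
    qed
    have gk: "gK k (2*Suc j) = fact (2*k-3-2*j) / (4^k * fact k * fact (k-2-2*j) * fact (2*j+1))"
    proof -
      have "2*k-1-2*Suc j = 2*k-3-2*j" "k - 2*Suc j = k-2-2*j" "2*Suc j - 1 = 2*j+1" by auto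
      thus ?thesis using jk by (simp add: gK_def)
    qed
    have sg: "(-1::real)^(k+Suc j) = - ((-1)^k * (-1)^j)" by (simp add: power_add)
    show ?thesis unfolding G1 G2 G3 Ga Gb Gc Zeq Peq gk sg C0_def
    proof (rule final_gen)
      have "(-1::real)^k * (-1)^k = ((-1) * (-1))^k" by (rule power_mult_distrib[symmetric])
      thus "(-1::real)^k * (-1)^k = 1" by simp
    qed simp_all
  qed
  have "faulhaber_b n k = C0 * (\<Sum>j<k div 2. (-1)^(k+Suc j) * gK k (2*Suc j) *
            (-2 * riemann_zeta (real (2*(n - Suc j))) / (2*pi)^(2*(n - Suc j))))"
    unfolding b1 QD_def using QDf_coeff[OF assms] by simp
  also have "\<dots> = (\<Sum>j<k div 2. C0 * ((-1)^(k+Suc j) * gK k (2*Suc j) *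
            (-2 * riemann_zeta (real (2*(n - Suc j))) / (2*pi)^(2*(n - Suc j)))))"
    by (rule sum_distrib_left)
  also have "\<dots> = (\<Sum>j<k div 2. 4 * Gamma (2 * real n + 1) * Gamma (real k + 2) / Gamma (2 * real k + 3) *
        ((-1) ^ j * Gamma (2 * real k - 2 - 2 * real j)
          / (Gamma (real k - 1 - 2 * real j) * Gamma (2 * real j + 2))
        * riemann_zeta (2 * real n - 2 * real j - 2)
          / (2 * pi) ^ (2 * n - 2 * j - 2)))"
    by (intro sum.cong refl trm) simp
  also have "\<dots> = 4 * Gamma (2 * real n + 1) * Gamma (real k + 2) / Gamma (2 * real k + 3) *
    (\<Sum>j = 0..<k div 2.
        (-1) ^ j * Gamma (2 * real k - 2 - 2 * real j)
          / (Gamma (real k - 1 - 2 * real j) * Gamma (2 * real j + 2))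
        * riemann_zeta (2 * real n - 2 * real j - 2)
          / (2 * pi) ^ (2 * n - 2 * j - 2))"
    by (simp add: sum_distrib_left atLeast0LessThan)
  finally show ?thesis .
qed

end
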